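(* Let $d\in\mathbb{N}$. There exists a constant $\Lambda=\Lambda(d)>0$ such that the following holds. Let $\mu,\nu$ be Borel probability measures on $[0,1]^{d}$, let $n\in\mathbb{N}$, let $\mathcal{T}$ be a finite $\mu$-partition of $[0,1]^{d}$, let $c>1$, and let $$X\subseteq \tfrac{1}{cn}\mathbb{Z}^{d}\cap\bigcup\mathcal{T},\qquad Y\subseteq \tfrac{1}{n}\mathbb{Z}^{d}\cap[0,1]^{d}$$ be finite sets such that $$\mu(T)\geq \frac{1}{n^{d}}|X\cap T|\quad\text{for every }T\in\mathcal{T},$$ and $$\nu(E)\leq \frac{1}{n^{d}}\left|\left\{y\in Y\colon d_{\infty}(y,E)\leq \tfrac{1}{n}\right\}\right|\quad\text{for every $\nu$-measurable }E\subseteq[0,1]^{d},$$ where $d_{\infty}$ is the distance induced by $\|\cdot\|_{\infty}$. Let $f\colon[0,1]^{d}\to[0,1]^{d}$ be a Lipschitz mapping with $f_{\sharp}\mu=\nu$. Then there exists an injective mapping $g\colon X\to Y$ with $$\operatorname{Lip}(g)\leq \Lambda\max\{1,\operatorname{Lip}(f)\}\,c\left(n\cdot\max_{T\in\mathcal{T}}\operatorname{diam}T+1\right).$$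
   Context: Given a measure $\mu$ on $[0,1]^{d}$, a collection $\mathcal{T}$ of subsets of $[0,1]^{d}$ is a $\mu$-partition of $[0,1]^{d}$ if $\mu([0,1]^{d}\setminus\bigcup\mathcal{T})=0$ and $\mu(T\cap T')=0$ for all distinct $T,T'\in\mathcal{T}$. $f_\sharp\mu$ denotes the pushforward measure. Lipschitz constants and diameters are with respect to the Euclidean metric. *)

theory Defs
  imports "HOL-Probability.Probability"
begin

definition unit_cube :: "(real^'n) set" where
  "unit_cube = {x. \<forall>i. 0 \<le> x$i \<and> x$i \<le> 1}"

definition scaled_lattice :: "real \<Rightarrow> (real^'n) set" where
  "scaled_lattice s = {x. \<forall>i. s * x$i \<in> \<int>}"

definition linf_dist :: "real^'n \<Rightarrow> real^'n \<Rightarrow> real" where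
  "linf_dist x y = Max (range (\<lambda>i. \<bar>x$i - y$i\<bar>))"

text \<open>Point-to-set sup-norm distance (infinite for the empty set).\<close>
definition linf_setdist :: "real^'n \<Rightarrow> (real^'n) set \<Rightarrow> ereal" where
  "linf_setdist y E = (INF e\<in>E. ereal (linf_dist y e))"

definition Lip :: "'a::metric_space set \<Rightarrow> ('a \<Rightarrow> 'b::metric_space) \<Rightarrow> real" where
  "Lip U f = Inf {L. lipschitz_on L U f}"

definition mu_partition :: "(real^'n) measure \<Rightarrow> (real^'n) set set \<Rightarrow> bool" where
  "mu_partition \<mu> \<T> \<longleftrightarrow> \<T> \<subseteq> sets \<mu> \<and> (\<forall>T\<in>\<T>. T \<subseteq> unit_cube)
     \<and> measure \<mu> (unit_cube - \<Union>\<T>) = 0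
     \<and> (\<forall>T\<in>\<T>. \<forall>T'\<in>\<T>. T \<noteq> T' \<longrightarrow> measure \<mu> (T \<inter> T') = 0)"

end

theory Submission
  imports Defs
begin


lemma hall:
  fixes N :: "'a \<Rightarrow> 'b set"
  assumes "finite X" "\<forall>x\<in>X. finite (N x)" "\<forall>A\<subseteq>X. card A \<le> card (\<Union>(N ` A))"
  shows "\<exists>g. (\<forall>x\<in>X. g x \<in> N x) \<and> inj_on g X"
  using assms
proof (induction "card X" arbitrary: X N rule: less_induct)
  case less
  show ?case
  proof (cases "X = {}")
    case True then show ?thesis by auto
  next
    case False
    show ?thesis
    proof (cases "\<exists>A. A \<subset> X \<and> A \<noteq> {} \<and> card (\<Union>(N ` A)) \<le> card A")
      case True
      then obtain A where A: "A \<subset> X" "A \<noteq> {}" "card (\<Union>(N ` A)) \<le> card A" by blast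
      define NA where "NA = \<Union>(N ` A)"
      have fA: "finite A" using A(1) less.prems(1) finite_subset by blast
      have fNA: "finite NA" unfolding NA_def using fA less.prems(2) A(1) by auto
      have cA: "card A < card X" using A(1) less.prems(1) by (simp add: psubset_card_mono)
      have "\<exists>g. (\<forall>x\<in>A. g x \<in> N x) \<and> inj_on g A"
        apply (rule less(1)[OF cA fA])
        using less.prems A(1) by auto
      then obtain g1 where g1: "\<forall>x\<in>A. g1 x \<in> N x" "inj_on g1 A" by blast
      define N2 where "N2 = (\<lambda>x. N x - NA)"
      have cXA: "card (X - A) < card X"
      proof -
        have "card (X - A) = card X - card A" using A(1) fA by (simp add: card_Diff_subset psubset_imp_subset)
        moreover have "card A > 0" using A(2) fA by (simp add: card_gt_0_iff)
        ultimately show ?thesis using cA by linarith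
      qed
      have h2: "\<forall>B\<subseteq>X - A. card B \<le> card (\<Union>(N2 ` B))"
      proof (intro allI impI)
        fix B assume B: "B \<subseteq> X - A"
        have fB: "finite B" using B less.prems(1) finite_subset by blast
        have fU: "finite (\<Union>(N2 ` B))" unfolding N2_def using fB B less.prems(2) by auto
        have "card (B \<union> A) \<le> card (\<Union>(N ` (B \<union> A)))"
          using less.prems(3) B A(1) by (meson Diff_subset le_supI order_trans psubset_imp_subset)
        also have "\<Union>(N ` (B \<union> A)) = \<Union>(N2 ` B) \<union> NA"
          unfolding N2_def NA_def by auto
        also have "card (\<Union>(N2 ` B) \<union> NA) = card (\<Union>(N2 ` B)) + card NA"
          by (rule card_Un_disjoint[OF fU fNA]) (auto simp: N2_def)
        also have "card (B \<union> A) = card B + card A"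
          using B fB fA by (intro card_Un_disjoint) auto
        finally show "card B \<le> card (\<Union>(N2 ` B))" using A(3) unfolding NA_def[symmetric] by linarith
      qed
      have "\<exists>g. (\<forall>x\<in>X - A. g x \<in> N2 x) \<and> inj_on g (X - A)"
        apply (rule less(1)[OF cXA])
        using less.prems h2 by (auto simp: N2_def)
      then obtain g2 where g2: "\<forall>x\<in>X - A. g2 x \<in> N2 x" "inj_on g2 (X - A)" by blast
      define g where "g = (\<lambda>x. if x \<in> A then g1 x else g2 x)"
      have "\<forall>x\<in>X. g x \<in> N x" using g1 g2 by (auto simp: g_def N2_def)
      moreover have "inj_on g X"
      proof (rule inj_onI)
        fix x y assume xy: "x \<in> X" "y \<in> X" "g x = g y"
        show "x = y"
        proof (cases "x \<in> A"; cases "y \<in> A")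
          assume "x \<in> A" "y \<in> A" then show ?thesis using xy g1 by (auto simp: g_def inj_on_def)
        next
          assume "x \<notin> A" "y \<notin> A" then show ?thesis using xy g2 by (auto simp: g_def inj_on_def)
        next
          assume a: "x \<in> A" "y \<notin> A"
          then have "g x \<in> NA" using g1 by (auto simp: g_def NA_def)
          moreover have "g y \<notin> NA" using a g2 xy(1,2) by (auto simp: g_def N2_def)
          ultimately show ?thesis using xy by auto
        next
          assume a: "x \<notin> A" "y \<in> A"
          then have "g y \<in> NA" using g1 by (auto simp: g_def NA_def)
          moreover have "g x \<notin> NA" using a g2 xy(1,2) by (auto simp: g_def N2_def)
          ultimately show ?thesis using xy by auto
        qed
      qed
      ultimately show ?thesis by blast
    next
      case False
      then have strict: "\<forall>A. A \<subset> X \<and> A \<noteq> {} \<longrightarrow> card A < card (\<Union>(N ` A))"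
        using not_le by blast
      obtain x where x: "x \<in> X" using \<open>X \<noteq> {}\<close> by blast
      have "card {x} \<le> card (\<Union>(N ` {x}))" using less.prems(3) x by blast
      then have "N x \<noteq> {}" by auto
      then obtain y where y: "y \<in> N x" by blast
      define N2 where "N2 = (\<lambda>z. N z - {y})"
      have cX: "card (X - {x}) < card X" using x less.prems(1)
        by (meson card_Diff1_less)
      have h2: "\<forall>B\<subseteq>X - {x}. card B \<le> card (\<Union>(N2 ` B))"
      proof (intro allI impI)
        fix B assume B: "B \<subseteq> X - {x}"
        show "card B \<le> card (\<Union>(N2 ` B))"
        proof (cases "B = {}")
          case True then show ?thesis by simp
        next
          case False
          have fB: "finite B" using B less.prems(1) finite_subset by blast
          have fU: "finite (\<Union>(N ` B))" using fB B less.prems(2) by auto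
          have "B \<subset> X" using B x by auto
          then have "card B < card (\<Union>(N ` B))" using strict False by blast
          moreover have "card (\<Union>(N2 ` B)) = card (\<Union>(N ` B) - {y})"
            unfolding N2_def by (rule arg_cong[where f=card]) auto
          moreover have "card (\<Union>(N ` B) - {y}) \<ge> card (\<Union>(N ` B)) - 1"
            using fU by (metis card_Diff_singleton_if diff_le_self order_refl)
          ultimately show ?thesis by linarith
        qed
      qed
      have "\<exists>g. (\<forall>z\<in>X - {x}. g z \<in> N2 z) \<and> inj_on g (X - {x})"
        apply (rule less(1)[OF cX])
        using less.prems h2 by (auto simp: N2_def)
      then obtain g2 where g2: "\<forall>z\<in>X - {x}. g2 z \<in> N2 z" "inj_on g2 (X - {x})" by blast
      define g where "g = g2(x := y)"
      have "\<forall>z\<in>X. g z \<in> N z" using g2 y by (auto simp: g_def N2_def)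
      moreover have "inj_on g X"
      proof (rule inj_onI)
        fix a b assume ab: "a \<in> X" "b \<in> X" "g a = g b"
        show "a = b"
        proof (cases "a = x"; cases "b = x")
          assume "a \<noteq> x" "b \<noteq> x"
          then show ?thesis using ab g2(2) by (auto simp: g_def inj_on_def)
        next
          assume "a = x" "b \<noteq> x"
          then have "g2 b \<noteq> y" using g2(1) ab by (auto simp: N2_def)
          then show ?thesis using ab \<open>a = x\<close> \<open>b \<noteq> x\<close> by (simp add: g_def)
        next
          assume "a \<noteq> x" "b = x"
          then have "g2 a \<noteq> y" using g2(1) ab by (auto simp: N2_def)
          then show ?thesis using ab \<open>a \<noteq> x\<close> \<open>b = x\<close> by (simp add: g_def)
        qed simp
      qed
      ultimately show ?thesis by blast
    qed
  qed
qed



lemma Lip_attained: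
  assumes "lipschitz_on L U f"
  shows "lipschitz_on (Lip U f) U f"
proof -
  let ?S = "{L. lipschitz_on L U f}"
  have ne: "?S \<noteq> {}" using assms by blast
  have ge: "\<And>L. L \<in> ?S \<Longrightarrow> 0 \<le> L" by (auto simp: lipschitz_on_def)
  have "0 \<le> Lip U f" unfolding Lip_def by (rule cInf_greatest[OF ne]) (use ge in auto)
  moreover have "dist (f x) (f y) \<le> Lip U f * dist x y" if "x \<in> U" "y \<in> U" for x y
  proof (cases "x = y")
    case True then show ?thesis by simp
  next
    case False
    then have dp: "dist x y > 0" by simp
    have "dist (f x) (f y) / dist x y \<le> Lip U f" unfolding Lip_def
    proof (rule cInf_greatest[OF ne])
      fix L assume "L \<in> ?S"
      then have "dist (f x) (f y) \<le> L * dist x y" using that by (auto simp: lipschitz_on_def)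
      then show "dist (f x) (f y) / dist x y \<le> L" using dp by (simp add: divide_le_eq)
    qed
    then show ?thesis using dp by (simp add: divide_le_eq)
  qed
  ultimately show ?thesis by (auto simp: lipschitz_on_def)
qed

lemma Lip_le:
  assumes "lipschitz_on K U g"
  shows "Lip U g \<le> K"
  unfolding Lip_def
  by (rule cInf_lower) (use assms in \<open>auto simp: lipschitz_on_def bdd_below_def\<close>)

lemma sum_measure_le:
  assumes fm: "finite_measure M" and S: "finite S" "S \<subseteq> sets M"
    and null: "\<forall>T\<in>S. \<forall>T'\<in>S. T \<noteq> T' \<longrightarrow> measure M (T \<inter> T') = 0"
  shows "(\<Sum>T\<in>S. measure M T) \<le> measure M (\<Union>S)"
  using S null
proof (induction S rule: finite_induct)
  case empty then show ?case by simp
next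
  case (insert T S)
  have TS: "T \<in> sets M" "\<Union>S \<in> sets M" using insert by auto
  have fmeq: "fmeasurable M = sets M" using fm by (simp add: finite_measure.fmeasurable_eq_sets)
  have "measure M (T \<inter> \<Union>S) \<le> (\<Sum>T'\<in>S. measure M (T \<inter> T'))"
  proof -
    have "T \<inter> \<Union>S = (\<Union>T'\<in>S. T \<inter> T')" by auto
    then show ?thesis using measure_UNION_le[of S "\<lambda>T'. T \<inter> T'" M] insert by auto
  qed
  also have "\<dots> = 0" using insert by (intro sum.neutral) auto
  finally have z: "measure M (T \<inter> \<Union>S) \<le> 0" .
  have "measure M (\<Union>(insert T S)) = measure M T + measure M (\<Union>S) - measure M (T \<inter> \<Union>S)"
    using measure_Un3[of T M "\<Union>S"] TS fmeq by simp
  moreover have "(\<Sum>T\<in>S. measure M T) \<le> measure M (\<Union>S)" using insert by auto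
  ultimately show ?case using insert z by simp
qed

lemma comp_le_linf: "\<bar>a$i - b$i\<bar> \<le> linf_dist a b"
  unfolding linf_dist_def by (rule Max_ge) auto

lemma dist_le_linf: "dist a b \<le> real CARD('n) * linf_dist a (b::real^'n)"
proof -
  have "dist a b = norm (a - b)" by (simp add: dist_norm)
  also have "\<dots> \<le> (\<Sum>i\<in>UNIV. \<bar>(a - b)$i\<bar>)" by (rule norm_le_l1_cart)
  also have "\<dots> \<le> (\<Sum>i\<in>(UNIV::'n set). linf_dist a b)"
    by (intro sum_mono) (simp add: comp_le_linf)
  finally show ?thesis by simp
qed

lemma lattice_sep:
  assumes "x \<in> scaled_lattice s" "y \<in> scaled_lattice s" "s > 0" "x \<noteq> (y::real^'n)"
  shows "dist x y \<ge> 1 / s"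
proof -
  obtain i where i: "x$i \<noteq> y$i" using assms(4) by (auto simp: vec_eq_iff)
  obtain a b where ab: "s * x$i = of_int a" "s * y$i = of_int b"
  proof -
    have "s * x$i \<in> \<int>" "s * y$i \<in> \<int>" using assms(1,2) unfolding scaled_lattice_def by auto
    then show ?thesis using that by (metis Ints_cases)
  qed
  have "a \<noteq> b"
  proof
    assume "a = b"
    then have "s * x$i = s * y$i" using ab by simp
    then show False using i assms(3) by simp
  qed
  then have "\<bar>of_int a - of_int b\<bar> \<ge> (1::real)"
    by (metis of_int_1_le_iff of_int_abs of_int_diff zero_less_abs_iff right_minus_eq int_one_le_iff_zero_less)
  then have "s * \<bar>x$i - y$i\<bar> \<ge> 1" using ab assms(3)
    by (metis abs_mult abs_of_pos right_diff_distrib)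
  then have "\<bar>x$i - y$i\<bar> \<ge> 1 / s" using assms(3) by (simp add: divide_le_eq mult.commute)
  moreover have "\<bar>x$i - y$i\<bar> \<le> dist x y"
    using component_le_norm_cart[of "x - y" i] by (simp add: dist_norm)
  ultimately show ?thesis by linarith
qed

lemma unit_cube_cbox: "unit_cube = cbox 0 (1::real^'n)"
  unfolding unit_cube_def by (auto simp: mem_box_cart)



lemma main:
  fixes \<mu> \<nu> :: "(real^'n) measure" and n :: nat and \<T> :: "(real^'n) set set"
    and c :: real and X Y :: "(real^'n) set" and f :: "real^'n \<Rightarrow> real^'n"
  assumes p\<mu>: "prob_space \<mu>" and s\<mu>: "sets \<mu> = sets (restrict_space borel unit_cube)"
    and p\<nu>: "prob_space \<nu>" and s\<nu>: "sets \<nu> = sets (restrict_space borel unit_cube)"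
    and n1: "n \<ge> 1" and fT: "finite \<T>" and part: "mu_partition \<mu> \<T>" and c1: "c > 1"
    and fX: "finite X" and Xs: "X \<subseteq> scaled_lattice (c * real n) \<inter> \<Union>\<T>"
    and fY: "finite Y" and Ys: "Y \<subseteq> scaled_lattice (real n) \<inter> unit_cube"
    and hX: "\<forall>T\<in>\<T>. measure \<mu> T \<ge> real (card (X \<inter> T)) / real n ^ CARD('n)"
    and hY: "\<forall>E\<in>sets \<nu>. measure \<nu> E \<le>
          real (card {y\<in>Y. linf_setdist y E \<le> ereal (1 / real n)}) / real n ^ CARD('n)"
    and fc: "f ` unit_cube \<subseteq> unit_cube" and fL: "\<exists>L. lipschitz_on L unit_cube f"
    and push: "distr \<mu> \<nu> f = \<nu>"
  shows "\<exists>g. g ` X \<subseteq> Y \<and> inj_on g X \<and>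
         Lip X g \<le> (2 + 2 * real CARD('n)) * max 1 (Lip unit_cube f) * c *
             (real n * Max (diameter ` \<T>) + 1)"
proof -
  define d where "d = real CARD('n)"
  define Lf where "Lf = Lip unit_cube f"
  define D where "D = Max (diameter ` \<T>)"
  define M where "M = max 1 Lf"
  have d1: "d \<ge> 1" unfolding d_def by simp
  have npos: "real n > 0" using n1 by simp
  have ndpos: "real n ^ CARD('n) > 0" using npos by simp
  have closed_cube: "closed (unit_cube :: (real^'n) set)" by (simp add: unit_cube_cbox closed_cbox)
  have bounded_cube: "bounded (unit_cube :: (real^'n) set)" by (simp add: unit_cube_cbox bounded_cbox)
  have cube_borel: "unit_cube \<in> sets (borel :: (real^'n) measure)" using closed_cube by simp
  have sp\<mu>: "space \<mu> = unit_cube"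
    using sets_eq_imp_space_eq[OF s\<mu>] by (simp add: space_restrict_space)
  have sp\<nu>: "space \<nu> = unit_cube"
    using sets_eq_imp_space_eq[OF s\<nu>] by (simp add: space_restrict_space)
  obtain L where "lipschitz_on L unit_cube f" using fL by blast
  then have lipf: "lipschitz_on Lf unit_cube f" unfolding Lf_def by (rule Lip_attained)
  then have Lf0: "Lf \<ge> 0" by (simp add: lipschitz_on_def)
  have contf: "continuous_on unit_cube f" using lipf by (rule lipschitz_on_continuous_on)
  have "f \<in> restrict_space borel unit_cube \<rightarrow>\<^sub>M restrict_space borel unit_cube"
    by (rule measurable_restrict_space2)
       (use fc borel_measurable_continuous_on_restrict[OF contf] in \<open>auto simp: space_restrict_space\<close>)
  then have meas: "f \<in> \<mu> \<rightarrow>\<^sub>M \<nu>" using measurable_cong_sets[OF s\<mu> s\<nu>] by simp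
  have pushE: "measure \<nu> E = measure \<mu> (f -` E \<inter> unit_cube)" if "E \<in> sets \<nu>" for E
    using measure_distr[OF meas that] push sp\<mu> by simp
  have fm: "finite_measure \<mu>" using p\<mu> by (rule prob_space.axioms(1))
  have Tsets: "\<T> \<subseteq> sets \<mu>" and Tcube: "\<forall>T\<in>\<T>. T \<subseteq> unit_cube"
    and Tcov: "measure \<mu> (unit_cube - \<Union>\<T>) = 0"
    and Tnull: "\<forall>T\<in>\<T>. \<forall>T'\<in>\<T>. T \<noteq> T' \<longrightarrow> measure \<mu> (T \<inter> T') = 0"
    using part unfolding mu_partition_def by auto
  have Tne: "\<T> \<noteq> {}"
  proof
    assume "\<T> = {}"
    then have "measure \<mu> (space \<mu>) = 0" using Tcov sp\<mu> by simp
    then show False using prob_space.prob_space[OF p\<mu>] by simp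
  qed
  have Tbdd: "bounded T" if "T \<in> \<T>" for T using Tcube that bounded_cube bounded_subset by blast
  have TD: "diameter T \<le> D" if "T \<in> \<T>" for T unfolding D_def using fT that by (intro Max_ge) auto
  have D0: "D \<ge> 0"
  proof -
    obtain T where "T \<in> \<T>" using Tne by blast
    then show ?thesis using TD[of T] diameter_ge_0[OF Tbdd[of T]] by linarith
  qed
  define Tx where "Tx = (\<lambda>x. SOME T. T \<in> \<T> \<and> x \<in> T)"
  have Tx: "Tx x \<in> \<T> \<and> x \<in> Tx x" if "x \<in> X" for x
  proof -
    have "\<exists>T. T \<in> \<T> \<and> x \<in> T" using Xs that by auto
    then show ?thesis unfolding Tx_def by (rule someI_ex)
  qed
  have clcube: "closure (Tx x) \<subseteq> unit_cube" if "x \<in> X" for x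
    using Tx[OF that] Tcube closed_cube by (meson closure_minimal)
  define Ex where "Ex = (\<lambda>x. f ` closure (Tx x))"
  have Exc: "compact (Ex x)" if "x \<in> X" for x
    unfolding Ex_def
    by (rule compact_continuous_image)
       (use continuous_on_subset[OF contf clcube[OF that]] compact_closure Tbdd Tx[OF that] in auto)
  have Excube: "Ex x \<subseteq> unit_cube" if "x \<in> X" for x
    unfolding Ex_def using clcube[OF that] fc by auto
  define N where "N = (\<lambda>x. {y\<in>Y. linf_setdist y (Ex x) \<le> ereal (1 / real n)})"
  have hall_cond: "\<forall>A\<subseteq>X. card A \<le> card (\<Union>(N ` A))"
  proof (intro allI impI)
    fix A assume AX: "A \<subseteq> X"
    show "card A \<le> card (\<Union>(N ` A))"
    proof (cases "A = {}")
      case True then show ?thesis by simp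
    next
      case Ane: False
      have fA: "finite A" using AX fX finite_subset by blast
      define S where "S = Tx ` A"
      define U where "U = \<Union>S"
      define E where "E = \<Union>(Ex ` A)"
      have fS: "finite S" unfolding S_def using fA by simp
      have ST: "S \<subseteq> \<T>" unfolding S_def using Tx AX by auto
      have Ecomp: "compact E" unfolding E_def using fA Exc AX by (intro compact_UN) auto
      have Esub: "E \<subseteq> unit_cube" unfolding E_def using Excube AX by auto
      have Esets: "E \<in> sets \<nu>"
        unfolding s\<nu> using Ecomp Esub cube_borel
        by (subst sets_restrict_space_iff) (auto intro: borel_closed compact_imp_closed)
      have c1: "card A \<le> card (X \<inter> U)"
        by (rule card_mono) (use fX AX Tx in \<open>auto simp: U_def S_def\<close>)
      have "X \<inter> U = (\<Union>T\<in>S. X \<inter> T)" unfolding U_def by auto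
      then have c2: "card (X \<inter> U) \<le> (\<Sum>T\<in>S. card (X \<inter> T))"
        using card_UN_le[OF fS, of "\<lambda>T. X \<inter> T"] by simp
      have c3: "real (\<Sum>T\<in>S. card (X \<inter> T)) \<le> (\<Sum>T\<in>S. real n ^ CARD('n) * measure \<mu> T)"
        unfolding of_nat_sum
      proof (rule sum_mono)
        fix T assume "T \<in> S"
        then have "real (card (X \<inter> T)) / real n ^ CARD('n) \<le> measure \<mu> T" using hX ST by auto
        then show "real (card (X \<inter> T)) \<le> real n ^ CARD('n) * measure \<mu> T"
          using ndpos by (simp add: divide_le_eq mult.commute)
      qed
      have c4: "(\<Sum>T\<in>S. measure \<mu> T) \<le> measure \<mu> U"
      proof -
        have "S \<subseteq> sets \<mu>" using ST Tsets by blast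
        moreover have "\<forall>T\<in>S. \<forall>T'\<in>S. T \<noteq> T' \<longrightarrow> measure \<mu> (T \<inter> T') = 0" using ST Tnull by blast
        ultimately show ?thesis unfolding U_def by (rule sum_measure_le[OF fm fS])
      qed
      have c5: "measure \<mu> U \<le> measure \<mu> (f -` E \<inter> unit_cube)"
      proof (rule finite_measure.finite_measure_mono[OF fm])
        show "U \<subseteq> f -` E \<inter> unit_cube"
        proof
          fix u assume "u \<in> U"
          then obtain x where x: "x \<in> A" "u \<in> Tx x" unfolding U_def S_def by auto
          then have "u \<in> closure (Tx x)" by (meson closure_subset subsetD)
          then have "f u \<in> Ex x" unfolding Ex_def by auto
          moreover have "u \<in> unit_cube" using Tx x AX Tcube by blast
          ultimately show "u \<in> f -` E \<inter> unit_cube" using x unfolding E_def by auto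
        qed
        show "f -` E \<inter> unit_cube \<in> sets \<mu>" using measurable_sets[OF meas Esets] sp\<mu> by simp
      qed
      define Z where "Z = {y\<in>Y. linf_setdist y E \<le> ereal (1 / real n)}"
      have c6: "measure \<mu> (f -` E \<inter> unit_cube) \<le> real (card Z) / real n ^ CARD('n)"
        using pushE[OF Esets] hY Esets unfolding Z_def by auto
      have c7: "Z \<subseteq> \<Union>(N ` A)"
      proof
        fix y assume yZ: "y \<in> Z"
        show "y \<in> \<Union>(N ` A)"
        proof (rule ccontr)
          assume "y \<notin> \<Union>(N ` A)"
          then have gt: "\<forall>x\<in>A. linf_setdist y (Ex x) > ereal (1 / real n)"
            using yZ unfolding N_def Z_def by auto
          define m where "m = Min ((\<lambda>x. linf_setdist y (Ex x)) ` A)"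
          have mgt: "m > ereal (1 / real n)" unfolding m_def using fA Ane gt by (subst Min_gr_iff) auto
          have "m \<le> linf_setdist y E" unfolding linf_setdist_def
          proof (rule INF_greatest)
            fix e assume "e \<in> E"
            then obtain x where x: "x \<in> A" "e \<in> Ex x" unfolding E_def by auto
            have "m \<le> linf_setdist y (Ex x)" unfolding m_def using fA x by (intro Min_le) auto
            also have "\<dots> \<le> ereal (linf_dist y e)" unfolding linf_setdist_def using x(2) by (rule INF_lower)
            finally show "m \<le> ereal (linf_dist y e)" .
          qed
          then show False using mgt yZ unfolding Z_def by auto
        qed
      qed
      have fU: "finite (\<Union>(N ` A))" using fY unfolding N_def by (rule finite_subset[rotated]) auto
      have "real (card A) \<le> real n ^ CARD('n) * (real (card Z) / real n ^ CARD('n))"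
      proof -
        have "real (card A) \<le> real n ^ CARD('n) * (\<Sum>T\<in>S. measure \<mu> T)"
        proof -
          have "real (card A) \<le> real (\<Sum>T\<in>S. card (X \<inter> T))"
            using order_trans[OF c1 c2] by (simp only: of_nat_le_iff)
          also note c3
          finally show ?thesis by (simp add: sum_distrib_left)
        qed
        also have "\<dots> \<le> real n ^ CARD('n) * (real (card Z) / real n ^ CARD('n))"
          using c4 c5 c6 ndpos by (intro mult_left_mono) auto
        finally show ?thesis .
      qed
      also have "\<dots> = real (card Z)" using ndpos by simp
      also have "\<dots> \<le> real (card (\<Union>(N ` A)))" using card_mono[OF fU c7] by simp
      finally show ?thesis by simp
    qed
  qed
  have "\<exists>g. (\<forall>x\<in>X. g x \<in> N x) \<and> inj_on g X"
    by (rule hall[OF fX _ hall_cond]) (use fY in \<open>auto simp: N_def\<close>)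
  then obtain g where gN: "\<forall>x\<in>X. g x \<in> N x" and ginj: "inj_on g X" by blast
  have gY: "g ` X \<subseteq> Y" using gN unfolding N_def by auto
  have close: "dist (g x) (f x) \<le> d / real n + Lf * D" if xX: "x \<in> X" for x
  proof (rule field_le_epsilon)
    fix \<epsilon> :: real assume \<epsilon>: "\<epsilon> > 0"
    have "linf_setdist (g x) (Ex x) \<le> ereal (1 / real n)" using gN xX unfolding N_def by auto
    also have "\<dots> < ereal (1 / real n + \<epsilon> / d)" using \<epsilon> d1 by simp
    finally obtain e where e: "e \<in> Ex x" "ereal (linf_dist (g x) e) < ereal (1 / real n + \<epsilon> / d)"
      unfolding linf_setdist_def by (auto simp: Inf_less_iff)
    obtain p where p: "p \<in> closure (Tx x)" "e = f p" using e(1) unfolding Ex_def by auto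
    have "dist (g x) e \<le> d * linf_dist (g x) e" unfolding d_def by (rule dist_le_linf)
    also have "\<dots> \<le> d * (1 / real n + \<epsilon> / d)" using e(2) d1 by (intro mult_left_mono) auto
    also have "\<dots> = d / real n + \<epsilon>" using d1 by (simp add: field_simps)
    finally have a: "dist (g x) e \<le> d / real n + \<epsilon>" .
    have "dist p x \<le> diameter (closure (Tx x))"
      using Tx[OF xX] Tbdd p(1) closure_subset
      by (intro diameter_bounded_bound) (auto simp: bounded_closure)
    also have "\<dots> = diameter (Tx x)" using Tx[OF xX] Tbdd by (simp add: diameter_closure)
    also have "\<dots> \<le> D" using Tx[OF xX] TD by blast
    finally have pxD: "dist p x \<le> D" .
    have pc: "p \<in> unit_cube" using clcube[OF xX] p(1) by blast
    have xc: "x \<in> unit_cube" using Tx[OF xX] Tcube by blast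
    have "dist (f p) (f x) \<le> Lf * dist p x" using lipf pc xc by (simp add: lipschitz_on_def)
    also have "\<dots> \<le> Lf * D" using pxD Lf0 by (intro mult_left_mono)
    finally have b: "dist (f p) (f x) \<le> Lf * D" .
    have "dist (g x) (f x) \<le> dist (g x) e + dist e (f x)" by (rule dist_triangle)
    then show "dist (g x) (f x) \<le> d / real n + Lf * D + \<epsilon>" using a b p(2) by simp
  qed
  define K where "K = (2 + 2 * d) * M * c * (real n * D + 1)"
  have M1: "M \<ge> 1" and MLf: "M \<ge> Lf" unfolding M_def by auto
  have K0: "K \<ge> 0" unfolding K_def using M1 c1 D0 d1 by simp
  have "lipschitz_on K X g"
    unfolding lipschitz_on_def
  proof (intro conjI ballI K0)
    fix x x' assume xX: "x \<in> X" and x'X: "x' \<in> X"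
    show "dist (g x) (g x') \<le> K * dist x x'"
    proof (cases "x = x'")
      case True then show ?thesis by simp
    next
      case False
      define \<delta> where "\<delta> = dist x x'"
      have cnpos: "c * real n > 0" using c1 npos by simp
      have "\<delta> \<ge> 1 / (c * real n)" unfolding \<delta>_def
        using lattice_sep[of x "c * real n" x'] xX x'X Xs cnpos False by auto
      then have cnd: "c * real n * \<delta> \<ge> 1" using cnpos by (simp add: divide_le_eq mult.commute)
      have \<delta>0: "\<delta> \<ge> 0" unfolding \<delta>_def by simp
      have xc: "x \<in> unit_cube" "x' \<in> unit_cube" using Tx xX x'X Tcube by blast+
      have "dist (g x) (g x') \<le> dist (g x) (f x) + dist (f x) (f x') + dist (f x') (g x')"
        using dist_triangle[of "g x" "g x'" "f x"] dist_triangle[of "f x" "g x'" "f x'"] by linarith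
      also have "\<dots> \<le> 2 * (d / real n + Lf * D) + Lf * \<delta>"
      proof -
        have "dist (f x) (f x') \<le> Lf * \<delta>" using lipf xc unfolding \<delta>_def lipschitz_on_def by blast
        moreover have "dist (f x') (g x') \<le> d / real n + Lf * D" using close[OF x'X] by (simp add: dist_commute)
        ultimately show ?thesis using close[OF xX] by (smt (verit))
      qed
      also have "\<dots> \<le> K * \<delta>"
      proof -
        have q0: "2 * (d / real n + Lf * D) \<ge> 0" using d1 npos Lf0 D0 by simp
        have "2 * (d / real n + Lf * D) \<le> 2 * (d / real n + Lf * D) * (c * real n * \<delta>)"
          using q0 cnd by (metis mult_left_mono mult.right_neutral)
        also have "\<dots> = (2 * d + 2 * Lf * D * real n) * c * \<delta>"
          using npos by (simp add: field_simps)
        finally have q1: "2 * (d / real n + Lf * D) \<le> (2 * d + 2 * Lf * D * real n) * c * \<delta>" .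
        have q2: "Lf * \<delta> \<le> M * c * \<delta>"
        proof -
          have "M * 1 \<le> M * c" using M1 c1 by (intro mult_left_mono) auto
          then have "Lf \<le> M * c" using MLf by linarith
          then show ?thesis using \<delta>0 by (rule mult_right_mono)
        qed
        have q3: "2 * d + 2 * Lf * D * real n + M \<le> (2 + 2 * d) * M * (real n * D + 1)"
        proof -
          have "Lf * D * real n \<le> M * D * real n" using MLf D0 npos by (simp add: mult_right_mono)
          moreover have "d \<le> d * M" using M1 d1 by simp
          moreover have "0 \<le> d * M * (real n * D)" using M1 d1 D0 npos by simp
          ultimately show ?thesis using M1 by (simp add: algebra_simps)
        qed
        have "(2 * d + 2 * Lf * D * real n) * c * \<delta> + M * c * \<delta>
              = (2 * d + 2 * Lf * D * real n + M) * (c * \<delta>)" by (simp add: algebra_simps)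
        also have "\<dots> \<le> ((2 + 2 * d) * M * (real n * D + 1)) * (c * \<delta>)"
          using q3 c1 \<delta>0 by (intro mult_right_mono) auto
        also have "\<dots> = K * \<delta>" unfolding K_def by (simp add: algebra_simps)
        finally show ?thesis using q1 q2 by linarith
      qed
      finally show ?thesis unfolding \<delta>_def .
    qed
  qed
  then have "Lip X g \<le> K" by (rule Lip_le)
  then have "g ` X \<subseteq> Y \<and> inj_on g X \<and> Lip X g \<le> K" using gY ginj by blast
  then show ?thesis unfolding K_def d_def M_def Lf_def D_def by (rule exI[of _ g])
qed

theorem lemma1:
  shows "\<exists>\<Lambda>::real. \<Lambda> > 0 \<and>
    (\<forall>(\<mu>::(real^'n) measure) (\<nu>::(real^'n) measure) (n::nat) (\<T>::(real^'n) set set)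
        (c::real) (X::(real^'n) set) (Y::(real^'n) set) (f::real^'n \<Rightarrow> real^'n).
      prob_space \<mu> \<and> sets \<mu> = sets (restrict_space borel unit_cube) \<and>
      prob_space \<nu> \<and> sets \<nu> = sets (restrict_space borel unit_cube) \<and>
      n \<ge> 1 \<and>
      finite \<T> \<and> mu_partition \<mu> \<T> \<and>
      c > 1 \<and>
      finite X \<and> X \<subseteq> scaled_lattice (c * real n) \<inter> \<Union>\<T> \<and>
      finite Y \<and> Y \<subseteq> scaled_lattice (real n) \<inter> unit_cube \<and>
      (\<forall>T\<in>\<T>. measure \<mu> T \<ge> real (card (X \<inter> T)) / real n ^ CARD('n)) \<and>
      (\<forall>E\<in>sets \<nu>. measure \<nu> E \<le>
          real (card {y\<in>Y. linf_setdist y E \<le> ereal (1 / real n)}) / real n ^ CARD('n)) \<and>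
      f ` unit_cube \<subseteq> unit_cube \<and> (\<exists>L. lipschitz_on L unit_cube f) \<and>
      distr \<mu> \<nu> f = \<nu>
      \<longrightarrow>
      (\<exists>g. g ` X \<subseteq> Y \<and> inj_on g X \<and>
         Lip X g \<le> \<Lambda> * max 1 (Lip unit_cube f) * c *
             (real n * Max (diameter ` \<T>) + 1)))"
    apply (rule exI[of _ "2 + 2 * real CARD('n)"])
  apply (intro conjI allI impI)
   apply simp
  apply (elim conjE)
  subgoal for \<mu> \<nu> n \<T> c X Y f
    by (rule main[where \<mu>=\<mu> and \<nu>=\<nu> and n=n and \<T>=\<T> and c=c and X=X and Y=Y and f=f])
  done

end
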